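(* $t(K(12,4))=2$. Moreover, if $S$ is a vertex cut of $K(12,4)$ such that $\frac{|S|}{c(K(12,4)\setminus S)} = 2$, then $S$ is the complement of a maximum independent set of $K(12,4)$.
   Context: The Kneser graph $K(n,k)$ has as vertices the $k$-element subsets of $[n]=\{1,\dots,n\}$, two vertices being adjacent iff they are disjoint. A vertex cut is a set $S$ of vertices whose removal disconnects the graph; $c(G\setminus S)$ is the number of connected components after deleting $S$; the toughness is $t(G)=\min_S |S|/c(G\setminus S)$ over vertex cuts $S$. *)

theory Defs
  imports Complex_Main
begin

definition kneser_verts :: "nat \<Rightarrow> nat \<Rightarrow> nat set set" where
  "kneser_verts n k = {A. A \<subseteq> {1..n} \<and> card A = k}"

definition kneser_adj :: "nat set \<Rightarrow> nat set \<Rightarrow> bool" where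
  "kneser_adj A B \<longleftrightarrow> A \<inter> B = {}"

definition induced_conn :: "'a set \<Rightarrow> ('a \<Rightarrow> 'a \<Rightarrow> bool) \<Rightarrow> 'a rel" where
  "induced_conn W E = (Id_on W) \<union> {(x, y). x \<in> W \<and> y \<in> W \<and> E x y}\<^sup>+"

definition components :: "'a set \<Rightarrow> ('a \<Rightarrow> 'a \<Rightarrow> bool) \<Rightarrow> 'a set set" where
  "components W E = W // induced_conn W E"

definition num_components :: "'a set \<Rightarrow> ('a \<Rightarrow> 'a \<Rightarrow> bool) \<Rightarrow> nat" where
  "num_components W E = card (components W E)"

definition vertex_cut :: "'a set \<Rightarrow> ('a \<Rightarrow> 'a \<Rightarrow> bool) \<Rightarrow> 'a set \<Rightarrow> bool" where
  "vertex_cut V E S \<longleftrightarrow> S \<subseteq> V \<and> num_components (V - S) E \<ge> 2"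

definition toughness :: "'a set \<Rightarrow> ('a \<Rightarrow> 'a \<Rightarrow> bool) \<Rightarrow> real" where
  "toughness V E = Inf {real (card S) / real (num_components (V - S) E) | S. vertex_cut V E S}"

definition independent_set :: "'a set \<Rightarrow> ('a \<Rightarrow> 'a \<Rightarrow> bool) \<Rightarrow> 'a set \<Rightarrow> bool" where
  "independent_set V E I \<longleftrightarrow> I \<subseteq> V \<and> (\<forall>x\<in>I. \<forall>y\<in>I. \<not> E x y)"

definition max_independent_set :: "'a set \<Rightarrow> ('a \<Rightarrow> 'a \<Rightarrow> bool) \<Rightarrow> 'a set \<Rightarrow> bool" where
  "max_independent_set V E I \<longleftrightarrow> independent_set V E I \<and>
     (\<forall>J. independent_set V E J \<longrightarrow> card J \<le> card I)"

end

theory Submission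
  imports Defs
begin


lemma conn_equiv:
  assumes sym: "\<And>x y. E x y \<Longrightarrow> E y x"
  shows "equiv W (induced_conn W E)"
proof -
  let ?r = "{(x, y). x \<in> W \<and> y \<in> W \<and> E x y}"
  have rs: "?r \<subseteq> W \<times> W" by auto
  have tr: "?r\<^sup>+ \<subseteq> W \<times> W" using trancl_subset_Sigma[OF rs] .
  have sr: "sym (?r\<^sup>+)" by (rule sym_trancl) (auto simp: sym_def sym)
  show ?thesis unfolding induced_conn_def
  proof (rule equivI)
    show "Id_on W \<union> ?r\<^sup>+ \<subseteq> W \<times> W" using tr by auto
    show "refl_on W (Id_on W \<union> ?r\<^sup>+)" by (auto simp: refl_on_def)
    show "sym (Id_on W \<union> ?r\<^sup>+)" using sr by (auto simp: sym_def)
    show "trans (Id_on W \<union> ?r\<^sup>+)"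
      by (auto simp: trans_def intro: trancl_trans)
  qed
qed

lemma conn_adj:
  assumes "x \<in> W" "y \<in> W" "E x y"
  shows "(x, y) \<in> induced_conn W E"
  using assms unfolding induced_conn_def by auto

lemma comp_facts:
  assumes symE: "symp E"
  shows "\<And>C. C \<in> components W E \<Longrightarrow> C \<subseteq> W \<and> C \<noteq> {}"
    and "\<And>C x y. C \<in> components W E \<Longrightarrow> x \<in> C \<Longrightarrow> y \<in> W \<Longrightarrow> E x y \<Longrightarrow> y \<in> C"
    and "\<And>C C'. C \<in> components W E \<Longrightarrow> C' \<in> components W E \<Longrightarrow> C \<noteq> C' \<Longrightarrow> C \<inter> C' = {}"
    and "\<And>y. y \<in> W \<Longrightarrow> \<exists>C \<in> components W E. y \<in> C"
    and "finite W \<Longrightarrow> finite (components W E)"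
proof -
  have sym: "\<And>x y. E x y \<Longrightarrow> E y x" using symE by (simp add: symp_def)
  have eq: "equiv W (induced_conn W E)" using conn_equiv[OF sym] .
  show "\<And>C. C \<in> components W E \<Longrightarrow> C \<subseteq> W \<and> C \<noteq> {}"
    using eq in_quotient_imp_subset in_quotient_imp_non_empty unfolding components_def by blast
  show "\<And>C x y. C \<in> components W E \<Longrightarrow> x \<in> C \<Longrightarrow> y \<in> W \<Longrightarrow> E x y \<Longrightarrow> y \<in> C"
  proof -
    fix C x y assume a: "C \<in> components W E" "x \<in> C" "y \<in> W" "E x y"
    have "x \<in> W" using a eq in_quotient_imp_subset unfolding components_def by blast
    then show "y \<in> C" using a eq in_quotient_imp_closed conn_adj unfolding components_def by metis
  qed
  show "\<And>C C'. C \<in> components W E \<Longrightarrow> C' \<in> components W E \<Longrightarrow> C \<noteq> C' \<Longrightarrow> C \<inter> C' = {}"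
    using eq quotient_disj unfolding components_def by blast
  show "\<And>y. y \<in> W \<Longrightarrow> \<exists>C \<in> components W E. y \<in> C"
    using eq Union_quotient unfolding components_def by blast
  show "finite W \<Longrightarrow> finite (components W E)"
    using eq equiv_type finite_quotient unfolding components_def by metis
qed

lemma indep_components:
  assumes "\<And>x y. x \<in> W \<Longrightarrow> y \<in> W \<Longrightarrow> \<not> E x y"
  shows "num_components W E = card W"
proof -
  have e: "{(x, y). x \<in> W \<and> y \<in> W \<and> E x y} = {}" using assms by auto
  have r: "induced_conn W E = Id_on W" unfolding induced_conn_def e by simp
  have "W // Id_on W = (\<lambda>a. {a}) ` W" unfolding quotient_def by auto
  hence "components W E = (\<lambda>a. {a}) ` W" unfolding components_def r .
  thus ?thesis unfolding num_components_def by (simp add: card_image inj_on_def)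
qed



lemma KV_def': "kneser_verts 12 4 = {B. B \<subseteq> {1..12::nat} \<and> card B = 4}"
  unfolding kneser_verts_def by simp

lemma KV_fin: "finite (kneser_verts 12 4)"
  unfolding KV_def' by (rule finite_subset[of _ "Pow {1..12}"]) auto

lemma KV_card: "card (kneser_verts 12 4) = 495"
proof -
  have "card (kneser_verts 12 4) = card {1..12::nat} choose 4" unfolding KV_def' by (rule n_subsets) simp
  thus ?thesis by (simp add: binomial_eq_0 numeral_eq_Suc)
qed

lemma KV_mem: "x \<in> kneser_verts 12 4 \<longleftrightarrow> x \<subseteq> {1..12} \<and> card x = 4"
  unfolding KV_def' by simp

lemma KV_nbr_card:
  assumes "x \<in> kneser_verts 12 4"
  shows "card {y \<in> kneser_verts 12 4. x \<inter> y = {}} = 70"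
proof -
  have e: "{y \<in> kneser_verts 12 4. x \<inter> y = {}} = {B. B \<subseteq> {1..12} - x \<and> card B = 4}"
    unfolding KV_def' by auto
  have fx: "finite x" using assms by (auto simp: KV_mem intro: finite_subset)
  have "card ({1..12::nat} - x) = 8" using assms fx by (simp add: KV_mem card_Diff_subset)
  moreover have "card {B. B \<subseteq> {1..12::nat} - x \<and> card B = 4} = card ({1..12::nat} - x) choose 4"
    by (rule n_subsets) simp
  ultimately show ?thesis unfolding e by (simp add: binomial_eq_0 numeral_eq_Suc)
qed

lemma KV_compl:
  assumes "x \<in> kneser_verts 12 4" "y \<in> kneser_verts 12 4" "x \<inter> y = {}"
  shows "{1..12} - x - y \<in> kneser_verts 12 4" "x \<inter> ({1..12} - x - y) = {}"
    "y \<inter> ({1..12} - x - y) = {}" "{1..12} - x - ({1..12} - x - y) = y"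
proof -
  have fx: "finite x" "finite y" using assms by (auto simp: KV_mem intro: finite_subset)
  have "card (x \<union> y) = 8" using assms fx by (simp add: KV_mem card_Un_disjoint)
  moreover have "x \<union> y \<subseteq> {1..12}" using assms by (auto simp: KV_mem)
  ultimately have "card ({1..12::nat} - (x \<union> y)) = 4" by (simp add: card_Diff_subset fx)
  moreover have "{1..12::nat} - x - y = {1..12} - (x \<union> y)" by auto
  ultimately show "{1..12} - x - y \<in> kneser_verts 12 4" by (simp add: KV_mem)
  show "x \<inter> ({1..12} - x - y) = {}" "y \<inter> ({1..12} - x - y) = {}" by auto
  show "{1..12} - x - ({1..12} - x - y) = y" using assms by (auto simp: KV_mem)
qed

lemma KV_five:
  assumes "v \<in> kneser_verts 12 4" "d \<in> kneser_verts 12 4" "v \<inter> d \<noteq> {}"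
  shows "5 \<le> card {Y \<in> kneser_verts 12 4. Y \<inter> v = {} \<and> Y \<inter> d = {}}"
proof -
  have fx: "finite v" "finite d" using assms by (auto simp: KV_mem intro: finite_subset)
  have "card (v \<inter> d) \<ge> 1" using assms fx by (simp add: Suc_le_eq card_gt_0_iff)
  hence "card (v \<union> d) \<le> 7" using card_Un_Int[OF fx] assms by (simp add: KV_mem)
  moreover have "v \<union> d \<subseteq> {1..12}" using assms by (auto simp: KV_mem)
  ultimately have c5: "card ({1..12::nat} - (v \<union> d)) \<ge> 5" by (simp add: card_Diff_subset fx)
  obtain W where W: "W \<subseteq> {1..12::nat} - (v \<union> d)" "card W = 5"
    using obtain_subset_with_card_n[OF c5] by blast
  have fW: "finite W" using W(1) finite_subset by blast
  have "card {B. B \<subseteq> W \<and> card B = 4} = card W choose 4" by (rule n_subsets[OF fW])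
  hence c: "card {B. B \<subseteq> W \<and> card B = 4} = 5" using W(2) by (simp add: binomial_eq_0 numeral_eq_Suc)
  have sub: "{B. B \<subseteq> W \<and> card B = 4} \<subseteq> {Y \<in> kneser_verts 12 4. Y \<inter> v = {} \<and> Y \<inter> d = {}}"
    using W(1) by (auto simp: KV_mem)
  have fin: "finite {Y \<in> kneser_verts 12 4. Y \<inter> v = {} \<and> Y \<inter> d = {}}" using KV_fin by simp
  show ?thesis using card_mono[OF fin sub] c by simp
qed

lemma star_card: "card {A \<in> kneser_verts 12 4. 1 \<in> A} = 165"
proof -
  have e: "kneser_verts 12 4 - {A \<in> kneser_verts 12 4. 1 \<in> A} = {B. B \<subseteq> {2..12::nat} \<and> card B = 4}"
  proof -
    have "{2..12::nat} = {1..12} - {1}" by auto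
    thus ?thesis unfolding KV_def' by auto
  qed
  have "card {B. B \<subseteq> {2..12::nat} \<and> card B = 4} = card {2..12::nat} choose 4" by (rule n_subsets) simp
  hence "card (kneser_verts 12 4 - {A \<in> kneser_verts 12 4. 1 \<in> A}) = 330" unfolding e
    by (simp add: binomial_eq_0 numeral_eq_Suc)
  moreover have "card (kneser_verts 12 4 - {A \<in> kneser_verts 12 4. 1 \<in> A}) = 495 - card {A \<in> kneser_verts 12 4. 1 \<in> A}"
    using KV_card KV_fin by (simp add: card_Diff_subset)
  moreover have "card {A \<in> kneser_verts 12 4. 1 \<in> A} \<le> 495" using KV_card card_mono[OF KV_fin, of "{A \<in> kneser_verts 12 4. 1 \<in> A}"]
    by auto
  ultimately show ?thesis by linarith
qed



lemma adj_sym: "kneser_adj x y \<Longrightarrow> kneser_adj y x"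
  unfolding kneser_adj_def by blast

lemma adj_symp: "symp kneser_adj"
  unfolding symp_def kneser_adj_def by blast

lemma card_filter_sum: "finite A \<Longrightarrow> card {x \<in> A. Q x} = (\<Sum>x\<in>A. if Q x then 1 else 0)"
  by (simp add: sum.inter_filter[symmetric])

lemma main_ineq:
  assumes S: "S \<subseteq> kneser_verts 12 4"
    and c2: "num_components (kneser_verts 12 4 - S) kneser_adj \<ge> 2"
  shows "2 * num_components (kneser_verts 12 4 - S) kneser_adj \<le> card S \<and>
    (card S = 2 * num_components (kneser_verts 12 4 - S) kneser_adj \<longrightarrow>
      (\<forall>x\<in>kneser_verts 12 4 - S. \<forall>y\<in>kneser_verts 12 4 - S. \<not> kneser_adj x y))"
proof -
  define V where "V = kneser_verts 12 4"
  define U where "U = V - S"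
  define K where "K = components U kneser_adj"
  define N where "N = (\<lambda>x. {y\<in>V. x \<inter> y = {}})"
  define cx where "cx = (\<lambda>x y. {1..12::nat} - x - y)"
  define P where "P = (\<lambda>x C. {y \<in> N x. y \<in> C \<or> cx x y \<in> C})"
  define G where "G = (\<lambda>C. \<Sum>x\<in>S. card (P x C))"
  note cf = comp_facts[of kneser_adj, OF adj_symp]
  have finV: "finite V" unfolding V_def by (rule KV_fin)
  have finS: "finite S" using S finV finite_subset unfolding V_def by blast
  have finU: "finite U" unfolding U_def using finV by simp
  have finK: "finite K" unfolding K_def using cf(5)[OF finU] .
  have cK: "card K \<ge> 2" using c2 unfolding K_def num_components_def U_def V_def .
  have SV: "S \<subseteq> V" using S unfolding V_def .
  have finN: "\<And>x. finite (N x)" unfolding N_def using finV by simp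
  have cardN: "\<And>x. x \<in> V \<Longrightarrow> card (N x) = 70" unfolding N_def V_def by (rule KV_nbr_card)
  have finC: "\<And>C. C \<in> K \<Longrightarrow> finite C" using cf(1) finU finite_subset unfolding K_def by metis
  have inv: "\<And>x y. x \<in> V \<Longrightarrow> y \<in> N x \<Longrightarrow> cx x y \<in> N x \<and> cx x (cx x y) = y \<and> y \<inter> cx x y = {}"
    unfolding N_def cx_def V_def using KV_compl by auto
  have step1: "(\<Sum>C\<in>K. card (P x C)) \<le> 70" if xS: "x \<in> S" for x
  proof -
    have xV: "x \<in> V" using xS SV by auto
    have disj: "\<forall>C\<in>K. \<forall>C'\<in>K. C \<noteq> C' \<longrightarrow> P x C \<inter> P x C' = {}"
    proof (intro ballI impI)
      fix C C' assume C: "C \<in> K" and C': "C' \<in> K" and ne: "C \<noteq> C'"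
      show "P x C \<inter> P x C' = {}"
      proof (rule ccontr)
        assume "P x C \<inter> P x C' \<noteq> {}"
        then obtain y where y: "y \<in> N x" "y \<in> C \<or> cx x y \<in> C" "y \<in> C' \<or> cx x y \<in> C'"
          unfolding P_def by auto
        have iv: "cx x y \<in> N x" "y \<inter> cx x y = {}" using inv[OF xV y(1)] by auto
        have closed: "\<And>D u w. D \<in> K \<Longrightarrow> u \<in> D \<Longrightarrow> w \<in> U \<Longrightarrow> u \<inter> w = {} \<Longrightarrow> w \<in> D"
          using cf(2) unfolding K_def kneser_adj_def by blast
        have sub: "\<And>D. D \<in> K \<Longrightarrow> D \<subseteq> U" using cf(1) unfolding K_def by blast
        have "y \<in> C \<and> y \<in> C' \<or> cx x y \<in> C \<and> cx x y \<in> C'"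
        proof -
          have ic: "cx x y \<inter> y = {}" using iv by blast
          show ?thesis using y(2,3) closed[OF C _ _ iv(2)] closed[OF C' _ _ iv(2)]
              closed[OF C _ _ ic] closed[OF C' _ _ ic] sub[OF C] sub[OF C'] by blast
        qed
        then show False using cf(3)[of C U C'] C C' ne unfolding K_def by blast
      qed
    qed
    have "card (\<Union>C\<in>K. P x C) = (\<Sum>C\<in>K. card (P x C))"
      by (rule card_UN_disjoint[OF finK]) (use disj finN in \<open>auto simp: P_def\<close>)
    moreover have "card (\<Union>C\<in>K. P x C) \<le> card (N x)"
      by (rule card_mono[OF finN]) (auto simp: P_def)
    ultimately show ?thesis using cardN[OF xV] by simp
  qed
  have step2: "(\<Sum>C\<in>K. G C) \<le> 70 * card S"
  proof -
    have "(\<Sum>C\<in>K. G C) = (\<Sum>x\<in>S. \<Sum>C\<in>K. card (P x C))"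
      unfolding G_def by (rule sum.swap)
    also have "\<dots> \<le> (\<Sum>x\<in>S. 70)" by (rule sum_mono) (rule step1)
    finally show ?thesis by simp
  qed
  have step3: "140 \<le> G C \<and> (2 \<le> card C \<longrightarrow> 141 \<le> G C)" if C: "C \<in> K" for C
  proof -
    have CU: "C \<subseteq> U" "C \<noteq> {}" using cf(1) C unfolding K_def by auto
    have fC: "finite C" using finC[OF C] .
    have CV: "C \<subseteq> V" using CU unfolding U_def by auto
    have CS: "C \<inter> S = {}" using CU unfolding U_def by auto
    have closed: "\<And>u w. u \<in> C \<Longrightarrow> w \<in> U \<Longrightarrow> u \<inter> w = {} \<Longrightarrow> w \<in> C"
      using cf(2) C unfolding K_def kneser_adj_def by blast
    obtain d where d: "d \<in> U" "d \<notin> C"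
    proof -
      have "card (K - {C}) \<ge> 1" using cK C finK by (simp add: card_Diff_singleton)
      hence "K - {C} \<noteq> {}" by (metis card.empty not_one_le_zero)
      then obtain C' where C': "C' \<in> K" "C' \<noteq> C" by blast
      obtain z where z: "z \<in> C'" using cf(1) C' unfolding K_def by blast
      have "z \<notin> C" using cf(3)[of C' U C] C' C z unfolding K_def by blast
      moreover have "z \<in> U" using cf(1) C' z unfolding K_def by blast
      ultimately show ?thesis using that by blast
    qed
    have dV: "d \<in> V" using d unfolding U_def by auto
    have Nsub: "N y \<subseteq> C \<union> S" if "y \<in> C" for y
    proof
      fix z assume z: "z \<in> N y"
      show "z \<in> C \<union> S"
      proof (cases "z \<in> S")
        case False
        hence "z \<in> U" using z unfolding N_def U_def by auto
        thus ?thesis using closed[OF that] z unfolding N_def by auto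
      qed simp
    qed
    define a where "a = (\<lambda>y. card (N y \<inter> C))"
    define sn where "sn = (\<lambda>y. card (N y \<inter> S))"
    have as70: "a y + sn y = 70" if y: "y \<in> C" for y
    proof -
      have "N y = (N y \<inter> C) \<union> (N y \<inter> S)" using Nsub[OF y] by blast
      moreover have "(N y \<inter> C) \<inter> (N y \<inter> S) = {}" using CS by blast
      moreover have "finite (N y \<inter> C)" "finite (N y \<inter> S)" using finN by auto
      ultimately have "card (N y) = card (N y \<inter> C) + card (N y \<inter> S)"
        using card_Un_disjoint[of "N y \<inter> C" "N y \<inter> S"] by simp
      thus ?thesis using cardN[of y] y CV unfolding a_def sn_def by auto
    qed
    have am: "a y \<le> card C - 1" if y: "y \<in> C" for y
    proof -
      have yV: "y \<in> V" using y CV by auto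
      have "y \<noteq> {}" using yV unfolding V_def by (auto simp: KV_mem)
      hence "y \<notin> N y" unfolding N_def by auto
      hence "N y \<inter> C \<subseteq> C - {y}" by auto
      hence "card (N y \<inter> C) \<le> card (C - {y})" using fC by (intro card_mono) auto
      thus ?thesis unfolding a_def using y fC by (simp add: card_Diff_singleton)
    qed
    have s5: "5 \<le> sn y" if y: "y \<in> C" for y
    proof -
      have yV: "y \<in> V" using y CV by auto
      have "y \<inter> d \<noteq> {}" using closed[OF y d(1)] d(2) by blast
      hence f5: "5 \<le> card {Y \<in> V. Y \<inter> y = {} \<and> Y \<inter> d = {}}"
        using KV_five yV dV unfolding V_def by blast
      have "{Y \<in> V. Y \<inter> y = {} \<and> Y \<inter> d = {}} \<subseteq> N y \<inter> S"
      proof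
        fix Y assume Y: "Y \<in> {Y \<in> V. Y \<inter> y = {} \<and> Y \<inter> d = {}}"
        have YN: "Y \<in> N y" using Y unfolding N_def by auto
        have "Y \<notin> C"
        proof
          assume "Y \<in> C"
          hence "d \<in> C" using closed[of Y d] d(1) Y by auto
          thus False using d(2) by simp
        qed
        thus "Y \<in> N y \<inter> S" using Nsub[OF y] YN by auto
      qed
      hence "card {Y \<in> V. Y \<inter> y = {} \<and> Y \<inter> d = {}} \<le> sn y"
        unfolding sn_def using finN by (intro card_mono) auto
      thus ?thesis using f5 by simp
    qed
    define A where "A = (\<lambda>x. N x \<inter> C)"
    define B where "B = (\<lambda>x. {y \<in> A x. cx x y \<in> C})"
    have finA: "\<And>x. finite (A x)" unfolding A_def using finN by simp
    have PA: "card (P x C) + card (B x) = 2 * card (A x)" if x: "x \<in> S" for x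
    proof -
      have xV: "x \<in> V" using x SV by auto
      have PU: "P x C = A x \<union> cx x ` A x"
      proof
        show "P x C \<subseteq> A x \<union> cx x ` A x"
        proof
          fix y assume "y \<in> P x C"
          hence y: "y \<in> N x" "y \<in> C \<or> cx x y \<in> C" unfolding P_def by auto
          show "y \<in> A x \<union> cx x ` A x"
          proof (cases "y \<in> C")
            case True thus ?thesis using y unfolding A_def by auto
          next
            case False
            hence "cx x y \<in> A x" using y inv[OF xV y(1)] unfolding A_def by auto
            moreover have "y = cx x (cx x y)" using inv[OF xV y(1)] by simp
            ultimately show ?thesis by blast
          qed
        qed
        show "A x \<union> cx x ` A x \<subseteq> P x C"
        proof
          fix y assume "y \<in> A x \<union> cx x ` A x"
          thus "y \<in> P x C"
          proof
            assume "y \<in> A x" thus ?thesis unfolding A_def P_def by auto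
          next
            assume "y \<in> cx x ` A x"
            then obtain z where z: "z \<in> A x" "y = cx x z" by auto
            have "z \<in> N x" "z \<in> C" using z unfolding A_def by auto
            thus ?thesis using inv[OF xV \<open>z \<in> N x\<close>] z(2) unfolding P_def by auto
          qed
        qed
      qed
      have IU: "A x \<inter> cx x ` A x = B x"
      proof
        show "A x \<inter> cx x ` A x \<subseteq> B x"
        proof
          fix y assume "y \<in> A x \<inter> cx x ` A x"
          then obtain z where z: "y \<in> A x" "z \<in> A x" "y = cx x z" by auto
          have "z \<in> N x" using z unfolding A_def by auto
          hence "cx x y = z" using inv[OF xV] z(3) by simp
          thus "y \<in> B x" using z unfolding B_def A_def by auto
        qed
        show "B x \<subseteq> A x \<inter> cx x ` A x"
        proof
          fix y assume y: "y \<in> B x"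
          hence yN: "y \<in> N x" "y \<in> A x" "cx x y \<in> C" unfolding B_def A_def by auto
          have "cx x y \<in> A x" using inv[OF xV yN(1)] yN(3) unfolding A_def by auto
          moreover have "y = cx x (cx x y)" using inv[OF xV yN(1)] by simp
          ultimately show "y \<in> A x \<inter> cx x ` A x" using yN(2) by blast
        qed
      qed
      have inj: "inj_on (cx x) (A x)"
      proof (rule inj_onI)
        fix u w assume "u \<in> A x" "w \<in> A x" "cx x u = cx x w"
        hence uw: "u \<in> N x" "w \<in> N x" "cx x u = cx x w" unfolding A_def by auto
        have "u = cx x (cx x u)" using inv[OF xV uw(1)] by simp
        also have "\<dots> = cx x (cx x w)" using uw(3) by simp
        also have "\<dots> = w" using inv[OF xV uw(2)] by simp
        finally show "u = w" .
      qed
      have "card (A x) + card (cx x ` A x) = card (A x \<union> cx x ` A x) + card (A x \<inter> cx x ` A x)"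
        by (rule card_Un_Int) (use finA in auto)
      thus ?thesis using PU IU card_image[OF inj] by simp
    qed
    have PgeA: "card (A x) \<le> card (P x C)" for x
    proof -
      have "A x \<subseteq> P x C" unfolding A_def P_def by auto
      moreover have "finite (P x C)" unfolding P_def using finN by simp
      ultimately show ?thesis by (rule card_mono[rotated])
    qed
    have sumA: "(\<Sum>x\<in>S. card (A x)) = (\<Sum>y\<in>C. sn y)"
    proof -
      have "(\<Sum>x\<in>S. card (A x)) = (\<Sum>x\<in>S. \<Sum>y\<in>C. if x \<inter> y = {} then 1 else 0)"
      proof (rule sum.cong[OF refl])
        fix x assume "x \<in> S"
        have "A x = {y \<in> C. x \<inter> y = {}}" unfolding A_def N_def using CV by auto
        thus "card (A x) = (\<Sum>y\<in>C. if x \<inter> y = {} then 1 else 0)" using card_filter_sum[OF fC] by simp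
      qed
      also have "\<dots> = (\<Sum>y\<in>C. \<Sum>x\<in>S. if x \<inter> y = {} then 1 else 0)" by (rule sum.swap)
      also have "\<dots> = (\<Sum>y\<in>C. sn y)"
      proof (rule sum.cong[OF refl])
        fix y assume "y \<in> C"
        have "N y \<inter> S = {x \<in> S. x \<inter> y = {}}" unfolding N_def using SV by auto
        thus "(\<Sum>x\<in>S. if x \<inter> y = {} then 1 else 0) = sn y" unfolding sn_def using card_filter_sum[OF finS] by simp
      qed
      finally show ?thesis .
    qed
    have sumB: "(\<Sum>x\<in>S. card (B x)) \<le> (\<Sum>y\<in>C. a y)"
    proof -
      have "(\<Sum>x\<in>S. card (B x)) = (\<Sum>x\<in>S. \<Sum>y\<in>C. if x \<inter> y = {} \<and> cx x y \<in> C then 1 else 0)"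
      proof (rule sum.cong[OF refl])
        fix x assume "x \<in> S"
        have "B x = {y \<in> C. x \<inter> y = {} \<and> cx x y \<in> C}" unfolding B_def A_def N_def using CV by auto
        thus "card (B x) = (\<Sum>y\<in>C. if x \<inter> y = {} \<and> cx x y \<in> C then 1 else 0)" using card_filter_sum[OF fC] by simp
      qed
      also have "\<dots> = (\<Sum>y\<in>C. \<Sum>x\<in>S. if x \<inter> y = {} \<and> cx x y \<in> C then 1 else 0)" by (rule sum.swap)
      also have "\<dots> \<le> (\<Sum>y\<in>C. a y)"
      proof (rule sum_mono)
        fix y assume y: "y \<in> C"
        have yV: "y \<in> V" using y CV by auto
        have "(\<Sum>x\<in>S. if x \<inter> y = {} \<and> cx x y \<in> C then 1 else 0) = card {x \<in> S. x \<inter> y = {} \<and> cx x y \<in> C}"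
          using card_filter_sum[OF finS] by simp
        also have "\<dots> \<le> card (N y \<inter> C)"
        proof (rule card_inj_on_le)
          show "inj_on (\<lambda>x. cx x y) {x \<in> S. x \<inter> y = {} \<and> cx x y \<in> C}"
          proof (rule inj_onI)
            fix u w assume u: "u \<in> {x \<in> S. x \<inter> y = {} \<and> cx x y \<in> C}" and w: "w \<in> {x \<in> S. x \<inter> y = {} \<and> cx x y \<in> C}"
              and e: "cx u y = cx w y"
            have "u \<in> V" "w \<in> V" using u w SV by auto
            hence "u \<subseteq> {1..12}" "w \<subseteq> {1..12}" unfolding V_def by (simp_all add: KV_mem)
            thus "u = w" using e u w unfolding cx_def by blast
          qed
          show "(\<lambda>x. cx x y) ` {x \<in> S. x \<inter> y = {} \<and> cx x y \<in> C} \<subseteq> N y \<inter> C"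
          proof
            fix z assume "z \<in> (\<lambda>x. cx x y) ` {x \<in> S. x \<inter> y = {} \<and> cx x y \<in> C}"
            then obtain x where x: "x \<in> S" "x \<inter> y = {}" "cx x y \<in> C" "z = cx x y" by auto
            have "x \<in> V" using x SV by auto
            hence "cx x y \<in> V" "y \<inter> cx x y = {}" using KV_compl[of x y] x yV unfolding cx_def V_def by auto
            thus "z \<in> N y \<inter> C" using x unfolding N_def by auto
          qed
          show "finite (N y \<inter> C)" using finN by simp
        qed
        finally show "(\<Sum>x\<in>S. if x \<inter> y = {} \<and> cx x y \<in> C then 1 else 0) \<le> a y" unfolding a_def .
      qed
      finally show ?thesis .
    qed
    define m where "m = card C"
    define X where "X = (\<Sum>y\<in>C. a y)"
    define Y where "Y = (\<Sum>y\<in>C. sn y)"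
    have m1: "m \<ge> 1" unfolding m_def using fC CU by (simp add: Suc_le_eq card_gt_0_iff)
    have XY: "X + Y = 70 * m"
    proof -
      have "X + Y = (\<Sum>y\<in>C. a y + sn y)" unfolding X_def Y_def by (simp add: sum.distrib)
      also have "\<dots> = (\<Sum>y\<in>C. 70)" by (rule sum.cong) (use as70 in auto)
      finally show ?thesis unfolding m_def by simp
    qed
    have GX: "G C + X \<ge> 2 * Y"
    proof -
      have "G C + (\<Sum>x\<in>S. card (B x)) = (\<Sum>x\<in>S. 2 * card (A x))"
        unfolding G_def sum.distrib[symmetric] by (rule sum.cong) (use PA in auto)
      also have "\<dots> = 2 * Y" unfolding Y_def sumA[symmetric] by (simp add: sum_distrib_left)
      finally show ?thesis using sumB unfolding X_def by linarith
    qed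
    have GY: "G C \<ge> Y"
    proof -
      have "(\<Sum>x\<in>S. card (A x)) \<le> G C" unfolding G_def by (rule sum_mono) (rule PgeA)
      thus ?thesis unfolding Y_def sumA .
    qed
    have Y5: "Y \<ge> 5 * m"
    proof -
      have "(\<Sum>y\<in>C. (5::nat)) \<le> Y" unfolding Y_def by (rule sum_mono) (rule s5)
      thus ?thesis unfolding m_def by simp
    qed
    have Xm: "X \<le> m * (m - 1)"
    proof -
      have "X \<le> (\<Sum>y\<in>C. card C - 1)" unfolding X_def by (rule sum_mono) (rule am)
      thus ?thesis unfolding m_def by simp
    qed
    obtain k where k: "m = Suc k" using m1 by (cases m) auto
    have "140 \<le> G C \<and> (2 \<le> m \<longrightarrow> 141 \<le> G C)"
    proof (cases "m \<le> 28")
      case True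
      have "3 * X \<le> 3 * (m * k)" using Xm k by simp
      also have "\<dots> = (3 * m) * k" by simp
      also have "\<dots> \<le> 139 * k" using True by (intro mult_right_mono) auto
      finally have "3 * X \<le> 139 * k" .
      hence "140 + k \<le> G C" using XY GX k by linarith
      thus ?thesis using k by auto
    next
      case False
      thus ?thesis using GY Y5 by linarith
    qed
    thus ?thesis unfolding m_def by auto
  qed
  have sum140: "140 * card K \<le> (\<Sum>C\<in>K. G C)"
  proof -
    have "(\<Sum>C\<in>K. (140::nat)) \<le> (\<Sum>C\<in>K. G C)" by (rule sum_mono) (use step3 in blast)
    thus ?thesis by simp
  qed
  have ineq: "2 * card K \<le> card S" using sum140 step2 by linarith
  have eqcase: "\<forall>x\<in>U. \<forall>y\<in>U. \<not> kneser_adj x y" if eq: "card S = 2 * card K"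
  proof -
    have small: "\<forall>C\<in>K. card C \<le> 1"
    proof (rule ccontr)
      assume "\<not> (\<forall>C\<in>K. card C \<le> 1)"
      then obtain C0 where C0: "C0 \<in> K" "2 \<le> card C0" by auto
      have lt: "140 < G C0" using step3[OF C0(1)] C0(2) by simp
      have "(\<Sum>C\<in>K. (140::nat)) < (\<Sum>C\<in>K. G C)"
        by (rule sum_strict_mono_ex1[OF finK]) (use step3 lt C0(1) in auto)
      thus False using step2 eq by simp
    qed
    show ?thesis
    proof (intro ballI notI)
      fix x y assume x: "x \<in> U" and y: "y \<in> U" and adj: "kneser_adj x y"
      obtain C where C: "C \<in> K" "x \<in> C" using cf(4)[OF x] unfolding K_def by blast
      have "y \<in> C" using cf(2)[of C U x y] C y adj unfolding K_def by blast
      hence "x = y" using small C finC[OF C(1)] card_le_Suc0_iff_eq[OF finC[OF C(1)]] by auto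
      hence "x = {}" using adj unfolding kneser_adj_def by simp
      moreover have "card x = 4" using x unfolding U_def V_def by (simp add: KV_mem)
      ultimately show False by simp
    qed
  qed
  show ?thesis using ineq eqcase unfolding K_def num_components_def U_def V_def by blast
qed



lemma indep_bound:
  assumes J: "independent_set (kneser_verts 12 4) kneser_adj J"
  shows "card J \<le> 165"
proof (cases "card J \<le> 1")
  case True thus ?thesis by simp
next
  case False
  have JV: "J \<subseteq> kneser_verts 12 4" and ind: "\<forall>x\<in>J. \<forall>y\<in>J. \<not> kneser_adj x y"
    using J unfolding independent_set_def by auto
  have e: "kneser_verts 12 4 - (kneser_verts 12 4 - J) = J" using JV by auto
  have nc: "num_components J kneser_adj = card J" by (rule indep_components) (use ind in auto)
  have "2 * card J \<le> card (kneser_verts 12 4 - J)"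
    using main_ineq[of "kneser_verts 12 4 - J"] False unfolding e nc by auto
  moreover have "card (kneser_verts 12 4 - J) = 495 - card J"
    using JV KV_fin KV_card by (simp add: card_Diff_subset finite_subset)
  moreover have "card J \<le> 495" using JV KV_fin KV_card card_mono by metis
  ultimately show ?thesis by linarith
qed

theorem theorem5p2:
  shows "toughness (kneser_verts 12 4) kneser_adj = 2 \<and>
    (\<forall>S. vertex_cut (kneser_verts 12 4) kneser_adj S \<and>
         real (card S) / real (num_components (kneser_verts 12 4 - S) kneser_adj) = 2 \<longrightarrow>
       (\<exists>I. max_independent_set (kneser_verts 12 4) kneser_adj I \<and> S = kneser_verts 12 4 - I))"
proof
  define I0 where "I0 = {A \<in> kneser_verts 12 4. 1 \<in> A}"
  define S0 where "S0 = kneser_verts 12 4 - I0"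
  have I0V: "I0 \<subseteq> kneser_verts 12 4" unfolding I0_def by auto
  have e0: "kneser_verts 12 4 - S0 = I0" unfolding S0_def using I0V by auto
  have cI0: "card I0 = 165" unfolding I0_def by (rule star_card)
  have nc0: "num_components I0 kneser_adj = 165"
  proof -
    have "num_components I0 kneser_adj = card I0"
      by (rule indep_components) (auto simp: I0_def kneser_adj_def)
    thus ?thesis using cI0 by simp
  qed
  have cS0: "card S0 = 330" unfolding S0_def using I0V KV_fin KV_card cI0
    by (simp add: card_Diff_subset finite_subset)
  have cut0: "vertex_cut (kneser_verts 12 4) kneser_adj S0"
    unfolding vertex_cut_def e0 nc0 by (auto simp: S0_def)
  have lower: "2 \<le> real (card S) / real (num_components (kneser_verts 12 4 - S) kneser_adj)"
    if "vertex_cut (kneser_verts 12 4) kneser_adj S" for S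
  proof -
    have c: "S \<subseteq> kneser_verts 12 4" "2 \<le> num_components (kneser_verts 12 4 - S) kneser_adj"
      using that unfolding vertex_cut_def by auto
    have "2 * num_components (kneser_verts 12 4 - S) kneser_adj \<le> card S"
      using main_ineq[OF c] by blast
    hence "2 * real (num_components (kneser_verts 12 4 - S) kneser_adj) \<le> real (card S)"
      by (metis of_nat_le_iff of_nat_mult of_nat_numeral)
    thus ?thesis using c(2) by (simp add: le_divide_eq)
  qed
  show "toughness (kneser_verts 12 4) kneser_adj = 2"
    unfolding toughness_def
  proof (rule cInf_eq_minimum)
    show "2 \<in> {real (card S) / real (num_components (kneser_verts 12 4 - S) kneser_adj) |S.
        vertex_cut (kneser_verts 12 4) kneser_adj S}"
      using cut0 cS0 nc0 unfolding e0 by (intro CollectI exI[of _ S0]) (simp add: e0)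
    show "\<And>x. x \<in> {real (card S) / real (num_components (kneser_verts 12 4 - S) kneser_adj) |S.
        vertex_cut (kneser_verts 12 4) kneser_adj S} \<Longrightarrow> 2 \<le> x"
      using lower by blast
  qed
  show "\<forall>S. vertex_cut (kneser_verts 12 4) kneser_adj S \<and>
         real (card S) / real (num_components (kneser_verts 12 4 - S) kneser_adj) = 2 \<longrightarrow>
       (\<exists>I. max_independent_set (kneser_verts 12 4) kneser_adj I \<and> S = kneser_verts 12 4 - I)"
  proof (intro allI impI)
    fix S assume a: "vertex_cut (kneser_verts 12 4) kneser_adj S \<and>
         real (card S) / real (num_components (kneser_verts 12 4 - S) kneser_adj) = 2"
    define U where "U = kneser_verts 12 4 - S"
    have c: "S \<subseteq> kneser_verts 12 4" "2 \<le> num_components U kneser_adj"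
      using a unfolding vertex_cut_def U_def by auto
    have "real (card S) = 2 * real (num_components U kneser_adj)"
      using a c(2) unfolding U_def by (simp add: divide_eq_eq)
    hence eq: "card S = 2 * num_components U kneser_adj"
      by (metis of_nat_eq_iff of_nat_mult of_nat_numeral)
    have ind: "\<forall>x\<in>U. \<forall>y\<in>U. \<not> kneser_adj x y"
      using main_ineq[OF c(1)] c(2) eq unfolding U_def by blast
    have ncU: "num_components U kneser_adj = card U" by (rule indep_components) (use ind in auto)
    have "card U = 495 - card S" unfolding U_def using c(1) KV_fin KV_card
      by (simp add: card_Diff_subset finite_subset)
    moreover have "card S \<le> 495" using c(1) KV_fin KV_card card_mono by metis
    ultimately have cU: "card U = 165" using eq ncU by linarith
    have isU: "independent_set (kneser_verts 12 4) kneser_adj U"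
      unfolding independent_set_def U_def using ind unfolding U_def by auto
    have "max_independent_set (kneser_verts 12 4) kneser_adj U"
      unfolding max_independent_set_def using isU indep_bound cU by auto
    moreover have "S = kneser_verts 12 4 - U" unfolding U_def using c(1) by auto
    ultimately show "\<exists>I. max_independent_set (kneser_verts 12 4) kneser_adj I \<and> S = kneser_verts 12 4 - I"
      by blast
  qed
qed

end
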